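(* Let $\underline s\in\mathbb{R}$ and $f,g\in\mathcal{F}_{\underline s}$ with $f\succsim_{\mathrm w}g$. Then $\mathcal{I}^{\mathrm w}_{f,g}=\{I\in\mathcal{K}([0,1]):\ I_f\le I\le I_g,\ \partial I(X)\subseteq[\underline s,f(1)]\}$ is a convex function interval, and $\varphi\in\mathcal{F}_{\underline s}$ satisfies $f\succsim_{\mathrm w}\varphi\succsim_{\mathrm w}g$ if and only if there exists $I\in\mathcal{I}^{\mathrm w}_{f,g}$ with $I=I_\varphi$.
   Context: $X=[0,1]$, $\mathcal{F}_{\underline s}=\{f\in L^1(X): f$ non-decreasing, $f(0)\ge\underline s\}$, $m_f=\int_0^1 f$, $I_\varphi(x)=\int_0^x\varphi(s)\,\mathrm{d}s-m_\varphi$. $f\succsim_{\mathrm w}g$ means $\int_0^x f-m_f\le\int_0^x g-m_g$ for all $x\in X$. $\mathcal{K}([0,1])$ is the set of continuous convex functions, $\partial I(X)=\bigcup_{x\in(0,1)}\partial I(x)$. A convex function interval is a set $\{u\in\mathcal{K}(X):\underline u\le u\le\bar u,\ \partial u(X)\subseteq[\underline s,\bar s]\}$ with $\underline u\le\bar u$ in $\mathcal{K}(X)$ and $\partial\underline u(X),\partial\bar u(X)\subseteq[\underline s,\bar s]$. *)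

theory Defs
  imports "HOL-Analysis.Analysis"
begin

text \<open>X = [0,1]. Functions on X are represented as real \<Rightarrow> real; only values on {0..1} matter.\<close>

definition F_class :: "real \<Rightarrow> (real \<Rightarrow> real) set" where
  "F_class s_lo = {f. f integrable_on {0..1} \<and> mono_on {0..1} f \<and> f 0 \<ge> s_lo}"

definition mean :: "(real \<Rightarrow> real) \<Rightarrow> real" where
  "mean f = integral {0..1} f"

definition Ifun :: "(real \<Rightarrow> real) \<Rightarrow> real \<Rightarrow> real" where
  "Ifun \<phi> x = integral {0..x} \<phi> - mean \<phi>"

definition weak_pref :: "(real \<Rightarrow> real) \<Rightarrow> (real \<Rightarrow> real) \<Rightarrow> bool" where
  "weak_pref f g \<longleftrightarrow> (\<forall>x\<in>{0..1}. integral {0..x} f - mean f \<le> integral {0..x} g - mean g)"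

definition Kconv :: "(real \<Rightarrow> real) set" where
  "Kconv = {u. continuous_on {0..1} u \<and> convex_on {0..1} u}"

definition subdiff :: "(real \<Rightarrow> real) \<Rightarrow> real \<Rightarrow> real set" where
  "subdiff u x = {p. \<forall>y\<in>{0..1}. u y \<ge> u x + p * (y - x)}"

definition subdiff_range :: "(real \<Rightarrow> real) \<Rightarrow> real set" where
  "subdiff_range u = (\<Union>x\<in>{0<..<1}. subdiff u x)"

definition cfi :: "(real \<Rightarrow> real) \<Rightarrow> (real \<Rightarrow> real) \<Rightarrow> real \<Rightarrow> real \<Rightarrow> (real \<Rightarrow> real) set" where
  "cfi lo hi sl sh = {u. u \<in> Kconv \<and> (\<forall>x\<in>{0..1}. lo x \<le> u x \<and> u x \<le> hi x)
                        \<and> subdiff_range u \<subseteq> {sl..sh}}"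

definition is_convex_function_interval :: "(real \<Rightarrow> real) set \<Rightarrow> bool" where
  "is_convex_function_interval C \<longleftrightarrow>
     (\<exists>lo hi sl sh. lo \<in> Kconv \<and> hi \<in> Kconv \<and> (\<forall>x\<in>{0..1}. lo x \<le> hi x)
        \<and> subdiff_range lo \<subseteq> {sl..sh} \<and> subdiff_range hi \<subseteq> {sl..sh}
        \<and> C = cfi lo hi sl sh)"

definition Iw :: "real \<Rightarrow> (real \<Rightarrow> real) \<Rightarrow> (real \<Rightarrow> real) \<Rightarrow> (real \<Rightarrow> real) set" where
  "Iw s_lo f g = {I. I \<in> Kconv \<and> (\<forall>x\<in>{0..1}. Ifun f x \<le> I x \<and> I x \<le> Ifun g x)
                     \<and> subdiff_range I \<subseteq> {s_lo..f 1}}"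

end

theory Submission
  imports Defs
begin

lemma Fc_int:
  assumes "f \<in> F_class s" "0 \<le> a" "a \<le> b" "b \<le> 1"
  shows "f integrable_on {a..b}"
  using assms unfolding F_class_def
  by (auto intro: integrable_subinterval_real)

lemma Fc_bounds:
  assumes "f \<in> F_class s" "0 \<le> a" "a \<le> b" "b \<le> 1"
  shows "(b - a) * f a \<le> integral {a..b} f \<and> integral {a..b} f \<le> (b - a) * f b"
proof -
  have i: "f integrable_on {a..b}" using Fc_int[OF assms] .
  have m: "mono_on {0..1} f" using assms(1) unfolding F_class_def by auto
  have "integral {a..b} (\<lambda>x. f a) \<le> integral {a..b} f"
    by (rule integral_le) (use i assms in \<open>auto intro!: mono_onD[OF m]\<close>)
  moreover have "integral {a..b} f \<le> integral {a..b} (\<lambda>x. f b)"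
    by (rule integral_le) (use i assms in \<open>auto intro!: mono_onD[OF m]\<close>)
  ultimately show ?thesis using assms by (simp add: mult.commute)
qed

lemma Fc_diff:
  assumes "f \<in> F_class s" "0 \<le> a" "a \<le> b" "b \<le> 1"
  shows "integral {0..b} f - integral {0..a} f = integral {a..b} f"
  using Henstock_Kurzweil_Integration.integral_combine[where a=0 and c=a and b=b and f=f] Fc_int[of f s 0 b] assms by auto

lemma Fc_Ifun_diff:
  assumes "f \<in> F_class s" "0 \<le> a" "a \<le> b" "b \<le> 1"
  shows "Ifun f b - Ifun f a = integral {a..b} f"
  using Fc_diff[OF assms] unfolding Ifun_def by simp

lemma Fc_Ifun1: "f \<in> F_class s \<Longrightarrow> Ifun f 1 = 0"
  unfolding Ifun_def mean_def by simp

lemma Fc_Kconv: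
  assumes "f \<in> F_class s"
  shows "Ifun f \<in> Kconv"
proof -
  have i: "f integrable_on {0..1}" using assms unfolding F_class_def by auto
  have c: "continuous_on {0..1} (Ifun f)"
    unfolding Ifun_def by (intro continuous_intros indefinite_integral_continuous_1 i)
  have "convex_on {0..1} (Ifun f)"
  proof (rule convex_on_linorderI)
    fix t x y :: real
    assume t: "t > 0" "t < 1" and x: "x \<in> {0..1}" and y: "y \<in> {0..1}" and xy: "x < y"
    define z where "z = (1 - t) *\<^sub>R x + t *\<^sub>R y"
    have z: "z = (1-t)*x + t*y" unfolding z_def by simp
    have xz: "x \<le> z" unfolding z using t xy by (simp add: algebra_simps)
    have zy: "z \<le> y"
    proof -
      have "(1-t) * x \<le> (1-t) * y" using t xy by (intro mult_left_mono) auto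
      then show ?thesis unfolding z by (simp add: algebra_simps)
    qed
    have A: "Ifun f z - Ifun f x \<le> (z - x) * f z"
      using Fc_Ifun_diff[OF assms, of x z] Fc_bounds[OF assms, of x z] x y xz zy by auto
    have B: "(y - z) * f z \<le> Ifun f y - Ifun f z"
      using Fc_Ifun_diff[OF assms, of z y] Fc_bounds[OF assms, of z y] x y xz zy by auto
    have e1: "z - x = t * (y - x)" unfolding z by (simp add: algebra_simps)
    have e2: "y - z = (1 - t) * (y - x)" unfolding z by (simp add: algebra_simps)
    have "(1-t) * (Ifun f z - Ifun f x) \<le> (1-t) * ((z - x) * f z)"
      using A t by (intro mult_left_mono) auto
    moreover have "t * ((y - z) * f z) \<le> t * (Ifun f y - Ifun f z)"
      using B t by (intro mult_left_mono) auto
    moreover have "(1-t) * ((z - x) * f z) = t * ((y - z) * f z)"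
      unfolding e1 e2 by simp
    ultimately show "Ifun f z \<le> (1 - t) * Ifun f x + t * Ifun f y"
      by (simp add: algebra_simps)
  qed (simp add: convex_real_interval)
  then show ?thesis using c unfolding Kconv_def by auto
qed

lemma sub_bounds:
  assumes f: "f \<in> F_class s" and p: "\<phi> \<in> F_class s"
    and le: "\<forall>x\<in>{0..1}. Ifun f x \<le> Ifun \<phi> x"
  shows "subdiff_range (Ifun \<phi>) \<subseteq> {s..f 1}"
proof
  fix p assume "p \<in> subdiff_range (Ifun \<phi>)"
  then obtain x where x: "0 < x" "x < 1" and sd: "\<forall>y\<in>{0..1}. Ifun \<phi> y \<ge> Ifun \<phi> x + p * (y - x)"
    unfolding subdiff_range_def subdiff_def by auto
  have s0: "s \<le> \<phi> 0" using p unfolding F_class_def by auto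
  have "Ifun \<phi> 0 \<ge> Ifun \<phi> x + p * (0 - x)" using bspec[OF sd, of 0] by auto
  moreover have "Ifun \<phi> x - Ifun \<phi> 0 \<ge> x * \<phi> 0"
    using Fc_Ifun_diff[OF p, of 0 x] Fc_bounds[OF p, of 0 x] x by auto
  moreover have "x * s \<le> x * \<phi> 0" using s0 x by (intro mult_left_mono) auto
  ultimately have "x * p \<ge> x * s" by (simp add: algebra_simps)
  hence lo: "s \<le> p" using x by simp
  have "Ifun \<phi> 1 \<ge> Ifun \<phi> x + p * (1 - x)" using bspec[OF sd, of 1] by auto
  hence "p * (1 - x) \<le> - Ifun \<phi> x" using Fc_Ifun1[OF p] by simp
  also have "\<dots> \<le> - Ifun f x" using le x by auto
  also have "\<dots> = Ifun f 1 - Ifun f x" using Fc_Ifun1[OF f] by simp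
  also have "\<dots> \<le> (1 - x) * f 1"
    using Fc_Ifun_diff[OF f, of x 1] Fc_bounds[OF f, of x 1] x by auto
  finally have "(1 - x) * p \<le> (1 - x) * f 1" by (simp add: mult.commute)
  hence "p \<le> f 1" using x by simp
  with lo show "p \<in> {s..f 1}" by simp
qed

theorem lemma4:
  fixes s_lo :: real and f g :: "real \<Rightarrow> real"
  assumes "f \<in> F_class s_lo" and "g \<in> F_class s_lo" and "weak_pref f g"
  shows "is_convex_function_interval (Iw s_lo f g)
    \<and> (\<forall>\<phi>\<in>F_class s_lo. (weak_pref f \<phi> \<and> weak_pref \<phi> g) \<longleftrightarrow>
          (\<exists>I\<in>Iw s_lo f g. \<forall>x\<in>{0..1}. I x = Ifun \<phi> x))"
proof -
  have wp: "weak_pref a b \<longleftrightarrow> (\<forall>x\<in>{0..1}. Ifun a x \<le> Ifun b x)" for a b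
    unfolding weak_pref_def Ifun_def by simp
  have fg: "\<forall>x\<in>{0..1}. Ifun f x \<le> Ifun g x" using assms(3) wp by simp
  have P1: "is_convex_function_interval (Iw s_lo f g)"
    unfolding is_convex_function_interval_def
    apply (rule exI[of _ "Ifun f"], rule exI[of _ "Ifun g"], rule exI[of _ s_lo], rule exI[of _ "f 1"])
    using Fc_Kconv[OF assms(1)] Fc_Kconv[OF assms(2)] fg
      sub_bounds[OF assms(1) assms(1)] sub_bounds[OF assms(1) assms(2) fg]
    unfolding Iw_def cfi_def by auto
  have P2: "(weak_pref f \<phi> \<and> weak_pref \<phi> g) \<longleftrightarrow>
          (\<exists>I\<in>Iw s_lo f g. \<forall>x\<in>{0..1}. I x = Ifun \<phi> x)" if p: "\<phi> \<in> F_class s_lo" for \<phi>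
  proof
    assume h: "weak_pref f \<phi> \<and> weak_pref \<phi> g"
    have "Ifun \<phi> \<in> Iw s_lo f g"
      using h wp Fc_Kconv[OF p] sub_bounds[OF assms(1) p] unfolding Iw_def by auto
    then show "\<exists>I\<in>Iw s_lo f g. \<forall>x\<in>{0..1}. I x = Ifun \<phi> x" by auto
  next
    assume "\<exists>I\<in>Iw s_lo f g. \<forall>x\<in>{0..1}. I x = Ifun \<phi> x"
    then obtain I where "I \<in> Iw s_lo f g" "\<forall>x\<in>{0..1}. I x = Ifun \<phi> x" by auto
    then show "weak_pref f \<phi> \<and> weak_pref \<phi> g" unfolding wp Iw_def by auto
  qed
  show ?thesis using P1 P2 by auto
qed

end
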